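(* If $T\in\mathscr T$ satisfies $T(\mathbb C[\mathfrak h^*_{\mathbb C}])\subseteq\mathbb C[\mathfrak h^*_{\mathbb C}]$, then $T$ lies in the image of the natural map $\mathscr S\to\mathscr T$.
   Context: Let $(X^*,\Phi,X_*,\Phi^\vee)$ be a root datum with Weyl group $W$ and $\mathfrak h^*=X^*\otimes\mathbb R$. Let $\widetilde W=X^*\rtimes W$ (extended affine Weyl group) act on $\mathfrak h^*_{\mathbb C}$ by affine transformations (translations by $X^*$ and the linear $W$-action). An element $s\in\widetilde W$ is a reflection if its fixed-point locus $H_s$ in $\mathfrak h^*_{\mathbb C}$ is an affine hyperplane; let $\widetilde W^\heartsuit$ be the set of reflections and for each $s$ fix an affine function $\ell_s$ with zero locus $H_s$. For $w\in\widetilde W$ let $t_w$ be the operator $(t_wP)(\alpha)=P(w^{-1}\alpha)$ on $\mathbb C[\mathfrak h^*_{\mathbb C}]$ (and on its fraction field $\mathbb C(\mathfrak h^*_{\mathbb C})$). Let $\mathscr R$ be the algebra of endomorphisms of $\mathbb C[\mathfrak h^*_{\mathbb C}]$ generated by all $t_w$ and multiplications by polynomials, viewed as a left $\mathbb C[\mathfrak h^*_{\mathbb C}]$-module. Put $\mathscr S=\mathbb C[\mathfrak h^*_{\mathbb C}][\ell_s^{-1}: s\in\widetilde W^\heartsuit]\otimes_{\mathbb C[\mathfrak h^*_{\mathbb C}]}\mathscr R$ and $\mathscr T=\mathbb C(\mathfrak h^*_{\mathbb C})\otimes_{\mathbb C[\mathfrak h^*_{\mathbb C}]}\mathscr R$,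 regarded as operators on $\mathbb C(\mathfrak h^*_{\mathbb C})$. *)

theory Defs
  imports "HOL-Analysis.Analysis"
begin

(* Coordinates: X^* = int^'n, X_* = int^'n, pairing = dot product;
   h^*_C = complex^'n. *)

definition ipair :: "int^'n \<Rightarrow> int^'n \<Rightarrow> int" where
  "ipair x y = (\<Sum>i\<in>UNIV. x$i * y$i)"

definition srefl :: "int^'n \<Rightarrow> int^'n \<Rightarrow> int^'n \<Rightarrow> int^'n" where
  "srefl a av x = x - ipair x av *s a"

(* root datum (X^*, Phi, X_*, Phi^vee) with Phi^vee = cor ` Phi, alpha |-> alpha^vee = cor alpha *)
definition root_datum :: "(int^'n) set \<Rightarrow> (int^'n \<Rightarrow> int^'n) \<Rightarrow> bool" where
  "root_datum Phi cor \<longleftrightarrow> finite Phi \<and> inj_on cor Phi \<and>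
     (\<forall>a\<in>Phi. ipair a (cor a) = 2 \<and>
        (\<forall>b\<in>Phi. srefl a (cor a) b \<in> Phi) \<and>
        (\<forall>b\<in>Phi. srefl (cor a) a (cor b) \<in> cor ` Phi))"

definition cvec :: "int^'n \<Rightarrow> complex^'n" where
  "cvec v = (\<chi> i. of_int (v$i))"

definition crefl :: "int^'n \<Rightarrow> int^'n \<Rightarrow> complex^'n \<Rightarrow> complex^'n" where
  "crefl a av v = v - (\<Sum>i\<in>UNIV. v$i * of_int (av$i)) *s cvec a"

(* Weyl group W: generated by the reflections s_alpha (involutions, so the
   generated monoid is the generated group) *)
inductive_set weyl_group :: "(int^'n) set \<Rightarrow> (int^'n \<Rightarrow> int^'n) \<Rightarrow> (complex^'n \<Rightarrow> complex^'n) set"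
  for Phi cor where
  wid: "id \<in> weyl_group Phi cor"
| wrefl: "a \<in> Phi \<Longrightarrow> w \<in> weyl_group Phi cor \<Longrightarrow> crefl a (cor a) \<circ> w \<in> weyl_group Phi cor"

definition ext_weyl_group :: "(int^'n) set \<Rightarrow> (int^'n \<Rightarrow> int^'n) \<Rightarrow> (complex^'n \<Rightarrow> complex^'n) set" where
  "ext_weyl_group Phi cor = {(\<lambda>v. w v + cvec lam) | w lam. w \<in> weyl_group Phi cor}"

definition is_affine_hyperplane :: "(complex^'n) set \<Rightarrow> bool" where
  "is_affine_hyperplane H \<longleftrightarrow> (\<exists>a c. a \<noteq> 0 \<and> H = {x. (\<Sum>i\<in>UNIV. a$i * x$i) = c})"

definition affine_reflections :: "(int^'n) set \<Rightarrow> (int^'n \<Rightarrow> int^'n) \<Rightarrow> (complex^'n \<Rightarrow> complex^'n) set" where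
  "affine_reflections Phi cor = {s \<in> ext_weyl_group Phi cor. is_affine_hyperplane {x. s x = x}}"

definition affine_fun :: "(complex^'n \<Rightarrow> complex) \<Rightarrow> bool" where
  "affine_fun f \<longleftrightarrow> (\<exists>a c. f = (\<lambda>x. (\<Sum>i\<in>UNIV. a$i * x$i) + c))"

(* C[h^*_C] realised as the ring of polynomial functions on complex^'n *)
inductive_set polyfun :: "(complex^'n \<Rightarrow> complex) set" where
  pconst: "(\<lambda>x. c) \<in> polyfun"
| pcoord: "(\<lambda>x. x$i) \<in> polyfun"
| padd: "f \<in> polyfun \<Longrightarrow> g \<in> polyfun \<Longrightarrow> (\<lambda>x. f x + g x) \<in> polyfun"
| pmult: "f \<in> polyfun \<Longrightarrow> g \<in> polyfun \<Longrightarrow> (\<lambda>x. f x * g x) \<in> polyfun"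

end

theory Submission
  imports Defs "HOL-Computational_Algebra.Polynomial"
begin


lemma pf_mult: "f \<in> polyfun \<Longrightarrow> g \<in> polyfun \<Longrightarrow> (\<lambda>x. f x * g x) \<in> polyfun"
  by (rule polyfun.pmult)
lemma pf_add: "f \<in> polyfun \<Longrightarrow> g \<in> polyfun \<Longrightarrow> (\<lambda>x. f x + g x) \<in> polyfun"
  by (rule polyfun.padd)
lemma pf_const: "(\<lambda>x. c) \<in> polyfun" by (rule polyfun.pconst)
lemma pf_coord: "(\<lambda>x. x$i) \<in> polyfun" by (rule polyfun.pcoord)
lemma pf_uminus: "f \<in> polyfun \<Longrightarrow> (\<lambda>x. - f x) \<in> polyfun"
  using pf_mult[OF pf_const[of "-1"]] by simp
lemma pf_diff: "f \<in> polyfun \<Longrightarrow> g \<in> polyfun \<Longrightarrow> (\<lambda>x. f x - g x) \<in> polyfun"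
  using pf_add[OF _ pf_uminus] by simp
lemma pf_sum: "finite S \<Longrightarrow> (\<forall>j\<in>S. f j \<in> polyfun) \<Longrightarrow> (\<lambda>x. \<Sum>j\<in>S. f j x) \<in> polyfun"
  by (induction S rule: finite_induct) (auto intro: pf_const pf_add)
lemma pf_prod: "finite S \<Longrightarrow> (\<forall>j\<in>S. f j \<in> polyfun) \<Longrightarrow> (\<lambda>x. \<Prod>j\<in>S. f j x) \<in> polyfun"
  by (induction S rule: finite_induct) (auto intro: pf_const pf_mult)
lemma pf_prod_list: "(\<forall>s\<in>set ss. f s \<in> polyfun) \<Longrightarrow> (\<lambda>x. \<Prod>s\<leftarrow>ss. f s x) \<in> polyfun"
  by (induction ss) (auto intro: pf_const pf_mult)
lemma pf_comp: "f \<in> polyfun \<Longrightarrow> (\<And>i. (\<lambda>x. \<phi> x $ i) \<in> polyfun) \<Longrightarrow> (\<lambda>x. f (\<phi> x)) \<in> polyfun"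
  by (induction f rule: polyfun.induct) (auto intro: pf_const pf_add pf_mult)

lemma pf_line: "f \<in> polyfun \<Longrightarrow> \<exists>p. \<forall>t. f (x + t *s v) = poly p t"
proof (induction f rule: polyfun.induct)
  case (pconst c) then show ?case by (intro exI[of _ "[:c:]"]) simp
next
  case (pcoord i) then show ?case by (intro exI[of _ "[:x$i, v$i:]"]) (simp add: mult.commute)
next
  case (padd f g) then obtain p q where "\<forall>t. f (x + t *s v) = poly p t" "\<forall>t. g (x + t *s v) = poly q t" by blast
  then show ?case by (intro exI[of _ "p+q"]) simp
next
  case (pmult f g) then obtain p q where "\<forall>t. f (x + t *s v) = poly p t" "\<forall>t. g (x + t *s v) = poly q t" by blast
  then show ?case by (intro exI[of _ "p*q"]) simp
qed

lemma pf_domain: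
  assumes f: "f \<in> polyfun" and g: "g \<in> polyfun" and fg: "\<forall>x. f x * g x = 0" and fnz: "f \<noteq> (\<lambda>x. 0)"
  shows "g = (\<lambda>x. 0)"
proof
  fix x
  obtain x0 where x0: "f x0 \<noteq> 0" using fnz by auto
  obtain pf where pf: "\<forall>t. f (x0 + t *s (x - x0)) = poly pf t" using pf_line[OF f] by blast
  obtain pg where pg: "\<forall>t. g (x0 + t *s (x - x0)) = poly pg t" using pf_line[OF g] by blast
  have "\<forall>t. poly (pf * pg) t = 0" using pf pg fg by (metis poly_mult)
  hence "pf * pg = 0" using poly_all_0_iff_0 by blast
  moreover have "poly pf 0 = f x0" using pf[rule_format, of 0] by simp
  hence "pf \<noteq> 0" using x0 by auto
  ultimately have "pg = 0" by simp
  then have "g (x0 + 1 *s (x - x0)) = 0" using pg[rule_format, of 1] by (metis poly_0)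
  moreover have "x0 + 1 *s (x - x0) = x" by (simp add: vector_smult_lid)
  ultimately show "g x = 0" by simp
qed

lemma pf_cancel:
  assumes "f \<in> polyfun" "g \<in> polyfun" "h \<in> polyfun" "h \<noteq> (\<lambda>x. 0)" "\<forall>x. f x * h x = g x * h x"
  shows "f = g"
proof -
  have "(\<lambda>x. f x - g x) = (\<lambda>x. 0)"
    using pf_domain[OF assms(3) pf_diff[OF assms(1,2)] _ assms(4)] assms(5)
    by (simp add: algebra_simps)
  then show ?thesis by (metis eq_iff_diff_eq_0 ext)
qed

lemma pf_prod_nz: "finite S \<Longrightarrow> (\<forall>j\<in>S. f j \<in> polyfun \<and> f j \<noteq> (\<lambda>x. 0)) \<Longrightarrow> (\<lambda>x. \<Prod>j\<in>S. f j x) \<noteq> (\<lambda>x. 0)"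
proof (induction S rule: finite_induct)
  case empty then show ?case by (metis one_neq_zero prod.empty)
next
  case (insert a S)
  have P: "(\<lambda>x. \<Prod>j\<in>S. f j x) \<in> polyfun" using insert pf_prod by blast
  show ?case
  proof
    assume "(\<lambda>x. \<Prod>j\<in>insert a S. f j x) = (\<lambda>x. 0)"
    hence "\<forall>x. f a x * (\<Prod>j\<in>S. f j x) = 0" using insert by (metis prod.insert)
    hence "(\<lambda>x. \<Prod>j\<in>S. f j x) = (\<lambda>x. 0)" using pf_domain[OF _ P] insert by blast
    thus False using insert by blast
  qed
qed



definition lf :: "complex^'n \<Rightarrow> complex^'n \<Rightarrow> complex" where
  "lf L y = (\<Sum>i\<in>UNIV. L$i * y$i)"
definition aff :: "complex^'n \<Rightarrow> complex \<Rightarrow> complex^'n \<Rightarrow> complex" where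
  "aff a c x = lf a x + c"

lemma lf_add: "lf L (x + y) = lf L x + lf L y"
  by (simp add: lf_def algebra_simps sum.distrib)
lemma lf_diff: "lf L (x - y) = lf L x - lf L y"
  by (simp add: lf_def algebra_simps sum_subtractf)
lemma lf_smult: "lf L (t *s y) = t * lf L y"
  by (simp add: lf_def algebra_simps sum_distrib_left)
lemma lf_neg: "lf L (- y) = - lf L y"
  by (simp add: lf_def sum_negf)
lemma lf_axis: "lf L (axis j 1) = L$j"
  unfolding lf_def axis_def by (simp add: if_distrib[where f="\<lambda>z. _ * z"] cong: if_cong)
lemma lf_axis2: "lf (axis j 1) y = y$j"
  unfolding lf_def axis_def by (simp add: if_distrib[where f="\<lambda>z. z * _"] cong: if_cong)
lemma lf_addL: "lf (L + M) y = lf L y + lf M y"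
  by (simp add: lf_def algebra_simps sum.distrib)
lemma lf_smultL: "lf (t *s L) y = t * lf L y"
  by (simp add: lf_def algebra_simps sum_distrib_left)
lemma pf_lf: "(\<lambda>x. lf L x) \<in> polyfun"
  unfolding lf_def by (rule pf_sum) (auto intro: pf_mult pf_const pf_coord)
lemma pf_aff: "aff a c \<in> polyfun"
  unfolding aff_def by (rule pf_add[OF pf_lf pf_const])

lemma pf_div:
  assumes ak: "a$k \<noteq> 0" and P: "P \<in> polyfun"
  shows "\<exists>R\<in>polyfun. \<forall>x. P x = aff a c x * R x + P (x - (aff a c x / a$k) *s axis k 1)"
  using P
proof (induction P rule: polyfun.induct)
  case (pconst c) then show ?case by (auto intro: pf_const)
next
  case (pcoord i)
  have "\<forall>x. x$i = aff a c x * ((axis k 1::complex^_)$i / a$k) + (x - (aff a c x / a$k) *s axis k 1)$i"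
    by simp
  then show ?case by (intro bexI[OF _ pf_const[of "(axis k 1::complex^_)$i / a$k"]])
next
  case (padd f g)
  let ?\<pi> = "\<lambda>x. x - (aff a c x / a$k) *s axis k 1"
  from padd obtain Rf Rg where R: "Rf \<in> polyfun" "Rg \<in> polyfun"
    and ef: "\<forall>x. f x = aff a c x * Rf x + f (?\<pi> x)"
    and eg: "\<forall>x. g x = aff a c x * Rg x + g (?\<pi> x)" by blast
  show ?case
  proof (intro bexI[of _ "\<lambda>x. Rf x + Rg x"] allI)
    show "(\<lambda>x. Rf x + Rg x) \<in> polyfun" using R by (rule pf_add)
    fix x
    have e1: "f x = aff a c x * Rf x + f (?\<pi> x)" using ef by blast
    have e2: "g x = aff a c x * Rg x + g (?\<pi> x)" using eg by blast
    have "f x + g x = (aff a c x * Rf x + f (?\<pi> x)) + (aff a c x * Rg x + g (?\<pi> x))"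
      using e1 e2 by (rule arg_cong2[where f="(+)"])
    also have "\<dots> = aff a c x * (Rf x + Rg x) + (f (?\<pi> x) + g (?\<pi> x))"
      by (simp add: algebra_simps)
    finally show "f x + g x = aff a c x * (Rf x + Rg x) + (f (?\<pi> x) + g (?\<pi> x))" .
  qed
next
  case (pmult f g)
  let ?\<pi> = "\<lambda>x. x - (aff a c x / a$k) *s axis k 1"
  from pmult obtain Rf Rg where R: "Rf \<in> polyfun" "Rg \<in> polyfun"
    and ef: "\<forall>x. f x = aff a c x * Rf x + f (?\<pi> x)"
    and eg: "\<forall>x. g x = aff a c x * Rg x + g (?\<pi> x)" by blast
  have cpi: "(\<lambda>x. ?\<pi> x $ i) \<in> polyfun" for i
  proof -
    have "(\<lambda>x. x$i - aff a c x * (inverse (a$k) * (axis k 1 :: complex^_)$i)) \<in> polyfun"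
      by (intro pf_diff pf_coord pf_mult pf_const pf_aff)
    thus ?thesis by (simp add: divide_inverse algebra_simps)
  qed
  have fpi: "(\<lambda>x. f (?\<pi> x)) \<in> polyfun" using pf_comp[OF pmult(1) cpi] .
  show ?case
  proof (rule bexI[of _ "\<lambda>x. Rf x * g x + f (?\<pi> x) * Rg x"])
    show "(\<lambda>x. Rf x * g x + f (?\<pi> x) * Rg x) \<in> polyfun"
    proof -
      have "f \<in> polyfun" "g \<in> polyfun" using pmult by blast+
      then show ?thesis using R fpi by (intro pf_add pf_mult)
    qed
    show "\<forall>x. f x * g x = aff a c x * (Rf x * g x + f (?\<pi> x) * Rg x) + f (?\<pi> x) * g (?\<pi> x)"
    proof
      fix x
      have e1: "f x = aff a c x * Rf x + f (?\<pi> x)" using ef by blast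
      have e2: "g x = aff a c x * Rg x + g (?\<pi> x)" using eg by blast
      have "f x * g x = (aff a c x * Rf x + f (?\<pi> x)) * g x" using e1 by (rule arg_cong)
      also have "\<dots> = aff a c x * Rf x * g x + f (?\<pi> x) * (aff a c x * Rg x + g (?\<pi> x))"
      proof -
        have h: "f (?\<pi> x) * g x = f (?\<pi> x) * (aff a c x * Rg x + g (?\<pi> x))" using e2 by (rule arg_cong)
        show ?thesis by (simp only: distrib_right h)
      qed
      also have "\<dots> = aff a c x * (Rf x * g x + f (?\<pi> x) * Rg x) + f (?\<pi> x) * g (?\<pi> x)"
        by (simp add: algebra_simps)
      finally show "f x * g x = aff a c x * (Rf x * g x + f (?\<pi> x) * Rg x) + f (?\<pi> x) * g (?\<pi> x)" .
    qed
  qed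
qed

lemma aff_pi: "a$k \<noteq> 0 \<Longrightarrow> aff a c (x - (aff a c x / a$k) *s axis k 1) = 0"
  by (simp add: aff_def lf_diff lf_smult lf_axis)

lemma aff_prop:
  assumes a: "a \<noteq> 0" and H: "\<forall>x. aff a c x = 0 \<longrightarrow> aff e d x = 0"
  shows "\<exists>lam. \<forall>x. aff e d x = lam * aff a c x"
proof -
  obtain k where ak: "a$k \<noteq> 0" using a by (metis vec_eq_iff zero_index)
  define lam where "lam = e$k / a$k"
  define x0 :: "complex^_" where "x0 = (-c/a$k) *s axis k 1"
  have ax0: "aff a c x0 = 0" using ak by (simp add: x0_def aff_def lf_smult lf_axis lf_neg)
  have ej: "e$j = lam * a$j" for j
  proof -
    define v :: "complex^_" where "v = axis j 1 - (a$j/a$k) *s axis k 1"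
    have "aff a c (x0 + v) = 0" using ak ax0
      by (simp add: v_def aff_def lf_add lf_diff lf_smult lf_axis)
    hence "aff e d (x0 + v) = 0" using H by blast
    moreover have "aff e d x0 = 0" using H ax0 by blast
    ultimately have "lf e v = 0" by (simp add: aff_def lf_add) (metis add.commute add.left_neutral add.assoc)
    thus ?thesis using ak by (simp add: v_def lf_diff lf_smult lf_axis lam_def field_simps)
  qed
  hence e: "e = lam *s a" by (simp add: vec_eq_iff)
  have "aff e d x0 = 0" using H ax0 by blast
  moreover have "lf a x0 = - c" using ax0 by (simp add: aff_def eq_neg_iff_add_eq_0)
  ultimately have "d = lam * c" by (simp add: e aff_def lf_smultL)
  thus ?thesis by (intro exI[of _ lam]) (simp add: e aff_def lf_smultL algebra_simps)
qed

lemma generic_lf: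
  fixes Z :: "(complex^'n) set"
  shows "finite Z \<Longrightarrow> 0 \<notin> Z \<Longrightarrow> \<exists>L. \<forall>z\<in>Z. lf L z \<noteq> 0"
proof (induction Z rule: finite_induct)
  case empty then show ?case by simp
next
  case (insert z Z)
  then obtain L where L: "\<forall>z\<in>Z. lf L z \<noteq> 0" by auto
  obtain k where zk: "z$k \<noteq> 0" using insert by (metis vec_eq_iff zero_index insertI1)
  define w :: "complex^'n" where "w = axis k 1"
  define B where "B = (\<lambda>z'. - lf L z' / lf w z') ` insert z Z"
  have "finite B" using insert by (simp add: B_def)
  then obtain t where t: "t \<notin> B" using ex_new_if_finite[OF infinite_UNIV_char_0] by blast
  show ?case
  proof (intro exI[of _ "L + t *s w"] ballI notI)
    fix y assume y: "y \<in> insert z Z" and h: "lf (L + t *s w) y = 0"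
    hence h': "lf L y + t * lf w y = 0" by (simp add: lf_addL lf_smultL)
    show False
    proof (cases "lf w y = 0")
      case True
      then show False using h' L y zk by (auto simp: w_def lf_axis2)
    next
      case False
      hence "t = - lf L y / lf w y" using h' by (simp add: field_simps add_eq_0_iff)
      thus False using t y by (auto simp: B_def)
    qed
  qed
qed



definition affm :: "(complex^'n \<Rightarrow> complex^'n) \<Rightarrow> bool" where
  "affm \<phi> \<longleftrightarrow> (\<exists>M c. \<phi> = (\<lambda>v. M *v v + c))"

lemma lf_mv: "lf L (M *v x) = lf (transpose M *v L) x"
proof -
  have "lf L (M *v x) = (\<Sum>i\<in>UNIV. \<Sum>j\<in>UNIV. L$i * (M$i$j * x$j))"
    unfolding lf_def matrix_vector_mult_def by (simp add: sum_distrib_left)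
  also have "\<dots> = (\<Sum>j\<in>UNIV. \<Sum>i\<in>UNIV. L$i * (M$i$j * x$j))" by (rule sum.swap)
  also have "\<dots> = lf (transpose M *v L) x"
    unfolding lf_def matrix_vector_mult_def transpose_def
    by (simp add: sum_distrib_left mult.commute mult.left_commute)
  finally show ?thesis .
qed

lemma lf_affm: "affm \<phi> \<Longrightarrow> \<exists>a c. (\<lambda>x. lf L (\<phi> x)) = aff a c"
  unfolding affm_def aff_def by (auto simp: lf_add lf_mv) blast

lemma crefl_lf: "crefl a av v = v - lf (cvec av) v *s cvec a"
  unfolding crefl_def lf_def cvec_def by (simp add: mult.commute)

lemma crefl_mat: "crefl a av = (\<lambda>v. (mat 1 - (\<chi> i j. cvec a $ i * cvec av $ j)) *v v)"
proof
  fix v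
  have K: "(\<chi> i j. cvec a $ i * cvec av $ j) *v v = lf (cvec av) v *s cvec a"
    unfolding lf_def matrix_vector_mult_def
    by (simp add: vec_eq_iff sum_distrib_left sum_distrib_right mult.commute mult.left_commute)
  show "crefl a av v = (mat 1 - (\<chi> i j. cvec a $ i * cvec av $ j)) *v v"
    unfolding crefl_lf matrix_vector_mult_diff_rdistrib matrix_vector_mul_lid K ..
qed

lemma weyl_mat: "w \<in> weyl_group Phi cor \<Longrightarrow> \<exists>M. w = (\<lambda>v. M *v v)"
proof (induction rule: weyl_group.induct)
  case wid then show ?case by (intro exI[of _ "mat 1"]) (auto simp: matrix_vector_mul_lid)
next
  case (wrefl a w)
  then obtain M where M: "w = (\<lambda>v. M *v v)" by blast
  show ?case by (intro exI[of _ "(mat 1 - (\<chi> i j. cvec a $ i * cvec (cor a) $ j)) ** M"])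
     (auto simp: M crefl_mat matrix_vector_mul_assoc)
qed

lemma weyl_comp: "w1 \<in> weyl_group Phi cor \<Longrightarrow> w2 \<in> weyl_group Phi cor \<Longrightarrow> w1 \<circ> w2 \<in> weyl_group Phi cor"
proof (induction w1 rule: weyl_group.induct)
  case wid then show ?case by simp
next
  case (wrefl a w) then show ?case by (metis comp_assoc weyl_group.wrefl)
qed

lemma lf_cvec: "lf (cvec av) (cvec a) = of_int (ipair a av)"
  unfolding lf_def cvec_def ipair_def by (simp add: mult.commute)

lemma crefl_invol: "ipair a av = 2 \<Longrightarrow> crefl a av (crefl a av v) = v"
  unfolding crefl_lf by (simp add: lf_diff lf_smult lf_cvec algebra_simps vector_sadd_rdistrib[symmetric])

lemma weyl_inv:
  assumes rd: "root_datum Phi cor"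
  shows "w \<in> weyl_group Phi cor \<Longrightarrow> \<exists>w'\<in>weyl_group Phi cor. w' \<circ> w = id \<and> w \<circ> w' = id"
proof (induction rule: weyl_group.induct)
  case wid then show ?case by (intro bexI[of _ id]) (auto intro: weyl_group.wid)
next
  case (wrefl a w)
  then obtain w' where w': "w' \<in> weyl_group Phi cor" "w' \<circ> w = id" "w \<circ> w' = id" by blast
  have two: "ipair a (cor a) = 2" using rd wrefl unfolding root_datum_def by blast
  let ?r = "crefl a (cor a)"
  have r: "?r \<in> weyl_group Phi cor" using weyl_group.wrefl[OF wrefl(1) weyl_group.wid] by simp
  have rr: "?r \<circ> ?r = id" using crefl_invol[OF two] by (simp add: fun_eq_iff)
  show ?case
  proof (intro bexI[of _ "w' \<circ> ?r"] conjI)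
    show "w' \<circ> ?r \<in> weyl_group Phi cor" using weyl_comp[OF w'(1) r] .
    show "w' \<circ> ?r \<circ> (?r \<circ> w) = id" using rr w' by (simp add: comp_assoc) (metis comp_assoc comp_id)
    show "?r \<circ> w \<circ> (w' \<circ> ?r) = id" using rr w' by (metis comp_assoc comp_id)
  qed
qed

lemma crefl_cvec: "crefl a av (cvec x) = cvec (srefl a av x)"
  unfolding crefl_lf srefl_def lf_cvec by (simp add: cvec_def vec_eq_iff)

lemma weyl_lattice: "w \<in> weyl_group Phi cor \<Longrightarrow> \<exists>mu. w (cvec lam) = cvec mu"
proof (induction arbitrary: lam rule: weyl_group.induct)
  case wid then show ?case by auto
next
  case (wrefl a w)
  then obtain mu where "w (cvec lam) = cvec mu" by blast
  then show ?case by (auto simp: crefl_cvec)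
qed



lemma ext_form: "g \<in> ext_weyl_group Phi cor \<Longrightarrow> \<exists>w lam. w \<in> weyl_group Phi cor \<and> g = (\<lambda>v. w v + cvec lam)"
  unfolding ext_weyl_group_def by blast

lemma cvec_diff: "cvec (x - y) = cvec x - cvec y"
  by (simp add: cvec_def vec_eq_iff)

lemma ext_inv:
  assumes rd: "root_datum Phi cor" and g: "g \<in> ext_weyl_group Phi cor"
  shows "affm g \<and> affm (inv g) \<and> (\<forall>x. g (inv g x) = x) \<and> (\<forall>x. inv g (g x) = x)"
proof -
  obtain w lam where w: "w \<in> weyl_group Phi cor" and gd: "g = (\<lambda>v. w v + cvec lam)"
    using ext_form[OF g] by blast
  obtain w' where w': "w' \<in> weyl_group Phi cor" "w' \<circ> w = id" "w \<circ> w' = id"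
    using weyl_inv[OF rd w] by blast
  obtain M where M: "w = (\<lambda>v. M *v v)" using weyl_mat[OF w] by blast
  obtain M' where M': "w' = (\<lambda>v. M' *v v)" using weyl_mat[OF w'(1)] by blast
  define h where "h = (\<lambda>v. w' (v - cvec lam))"
  have hg: "h (g x) = x" for x using w'(2) by (simp add: h_def gd fun_eq_iff)
  have gh: "g (h x) = x" for x using w'(3) by (simp add: h_def gd fun_eq_iff)
  have ih: "inv g = h" by (rule inv_equality) (use hg gh in auto)
  have "affm h" unfolding affm_def h_def M'
    by (intro exI[of _ M'] exI[of _ "- (M' *v cvec lam)"]) (simp add: matrix_vector_mult_diff_distrib)
  moreover have "affm g" unfolding affm_def gd M by blast
  ultimately show ?thesis using ih hg gh by simp
qed

lemma ext_comp_inv: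
  assumes rd: "root_datum Phi cor" and g0: "g0 \<in> ext_weyl_group Phi cor" and g: "g \<in> ext_weyl_group Phi cor"
  shows "g0 \<circ> inv g \<in> ext_weyl_group Phi cor"
proof -
  obtain w0 lam0 where w0: "w0 \<in> weyl_group Phi cor" and g0d: "g0 = (\<lambda>v. w0 v + cvec lam0)"
    using ext_form[OF g0] by blast
  obtain w lam where w: "w \<in> weyl_group Phi cor" and gd: "g = (\<lambda>v. w v + cvec lam)"
    using ext_form[OF g] by blast
  obtain w' where w': "w' \<in> weyl_group Phi cor" "w' \<circ> w = id" "w \<circ> w' = id"
    using weyl_inv[OF rd w] by blast
  have ih: "inv g = (\<lambda>v. w' (v - cvec lam))"
    by (rule inv_equality) (use w' in \<open>simp_all add: gd fun_eq_iff\<close>)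
  have ww: "w0 \<circ> w' \<in> weyl_group Phi cor" using weyl_comp[OF w0 w'(1)] .
  obtain mu where mu: "(w0 \<circ> w') (cvec lam) = cvec mu" using weyl_lattice[OF ww] by blast
  obtain N where N: "w0 \<circ> w' = (\<lambda>v. N *v v)" using weyl_mat[OF ww] by blast
  have "g0 \<circ> inv g = (\<lambda>v. (w0 \<circ> w') v + cvec (lam0 - mu))"
  proof
    fix v
    have "(g0 \<circ> inv g) v = (w0 \<circ> w') (v - cvec lam) + cvec lam0" by (simp add: ih g0d)
    also have "\<dots> = (w0 \<circ> w') v - (w0 \<circ> w') (cvec lam) + cvec lam0"
      by (simp only: N matrix_vector_mult_diff_distrib)
    finally show "(g0 \<circ> inv g) v = (w0 \<circ> w') v + cvec (lam0 - mu)" using mu by (simp add: cvec_diff)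
  qed
  then show ?thesis unfolding ext_weyl_group_def using ww by blast
qed

lemma affm_fix:
  assumes s: "affm s" and a: "a \<noteq> 0" and H: "\<forall>x. aff a c x = 0 \<longrightarrow> s x = x"
    and nid: "\<exists>x. s x \<noteq> x"
  shows "{x. s x = x} = {x. aff a c x = 0}"
proof (rule ccontr)
  assume "{x. s x = x} \<noteq> {x. aff a c x = 0}"
  then obtain y where y: "s y = y" "aff a c y \<noteq> 0" using H by blast
  obtain M d where sd: "s = (\<lambda>v. M *v v + d)" using s unfolding affm_def by blast
  have "affm (\<lambda>x. s x - x)" unfolding affm_def sd
    by (intro exI[of _ "M - mat 1"] exI[of _ d]) (simp add: matrix_vector_mult_diff_rdistrib fun_eq_iff)
  have ci: "s x $ i = x $ i" for x i
  proof -
    obtain e f where ef: "(\<lambda>x. lf (axis i 1) (s x - x)) = aff e f"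
      using lf_affm[OF \<open>affm (\<lambda>x. s x - x)\<close>] by blast
    have efx: "aff e f x = s x $ i - x $ i" for x
      using fun_cong[OF ef, of x] by (simp add: lf_axis2)
    have "\<forall>x. aff a c x = 0 \<longrightarrow> aff e f x = 0"
      using H by (simp add: efx)
    then obtain lam where lam: "\<forall>x. aff e f x = lam * aff a c x" using aff_prop[OF a] by blast
    have "aff e f y = 0" using y(1) by (simp add: efx)
    hence "lam = 0" using lam y(2) by simp
    hence "aff e f x = 0" using lam by simp
    thus ?thesis by (simp add: efx)
  qed
  thus False using nid by (simp add: vec_eq_iff)
qed



lemma pf_invlf:
  assumes rd: "root_datum Phi cor" and g: "g \<in> ext_weyl_group Phi cor"
  shows "(\<lambda>x. lf L (inv g x)) \<in> polyfun"
proof -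
  have "affm (inv g)" using ext_inv[OF rd g] by blast
  then obtain a c where "(\<lambda>x. lf L (inv g x)) = aff a c" using lf_affm by blast
  then show ?thesis using pf_aff by metis
qed

lemma pf_inv_comp:
  assumes rd: "root_datum Phi cor" and g: "g \<in> ext_weyl_group Phi cor" and P: "P \<in> polyfun"
  shows "(\<lambda>x. P (inv g x)) \<in> polyfun"
proof (rule pf_comp[OF P])
  fix i show "(\<lambda>x. inv g x $ i) \<in> polyfun" using pf_invlf[OF rd g, of "axis i 1"] by (simp add: lf_axis2)
qed

lemma aff_diff: "aff a c x - aff a' c' x = aff (a - a') (c - c') x"
  by (simp add: aff_def lf_def sum_subtractf algebra_simps)

lemma dform:
  assumes rd: "root_datum Phi cor" and g0: "g0 \<in> ext_weyl_group Phi cor" and g: "g \<in> ext_weyl_group Phi cor"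
  shows "\<exists>a c. (\<lambda>x. lf L (inv g0 x) - lf L (inv g x)) = aff a c"
proof -
  obtain a c where ac: "(\<lambda>x. lf L (inv g0 x)) = aff a c"
    using ext_inv[OF rd g0] lf_affm by blast
  obtain a' c' where ac': "(\<lambda>x. lf L (inv g x)) = aff a' c'"
    using ext_inv[OF rd g] lf_affm by blast
  have "(\<lambda>x. lf L (inv g0 x) - lf L (inv g x)) = aff (a - a') (c - c')"
  proof
    fix x show "lf L (inv g0 x) - lf L (inv g x) = aff (a - a') (c - c') x"
      using fun_cong[OF ac, of x] fun_cong[OF ac', of x] aff_diff by metis
  qed
  then show ?thesis by blast
qed

lemma inv_neq:
  assumes rd: "root_datum Phi cor" and g0: "g0 \<in> ext_weyl_group Phi cor" and g: "g \<in> ext_weyl_group Phi cor"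
    and ne: "g0 \<noteq> g"
  shows "\<exists>x. inv g0 x \<noteq> inv g x"
proof (rule ccontr)
  assume "\<not> ?thesis"
  hence eq: "inv g0 x = inv g x" for x by blast
  have "g0 y = g y" for y
  proof -
    have "g0 y = g0 (inv g0 (g0 y))" using ext_inv[OF rd g0] by simp
    also have "\<dots> = g0 (inv g (g0 y))" by (simp add: eq)
    finally have "g0 y = g0 (inv g (g0 y))" .
    moreover have "inv g (g y) = y" using ext_inv[OF rd g] by simp
    ultimately show ?thesis
      using ext_inv[OF rd g0] ext_inv[OF rd g] eq by metis
  qed
  thus False using ne by blast
qed

lemma stepA:
  fixes F :: "(complex^'n \<Rightarrow> complex^'n) set"
  assumes rd: "root_datum Phi cor"
    and finF: "finite F" and FW: "F \<subseteq> ext_weyl_group Phi cor"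
    and pq: "\<forall>g\<in>F. p g \<in> polyfun \<and> q g \<in> polyfun \<and> q g \<noteq> (\<lambda>x. 0)"
    and hT: "\<forall>P\<in>polyfun. \<exists>Q\<in>polyfun. \<forall>x. (\<forall>g\<in>F. q g x \<noteq> 0) \<longrightarrow>
           (\<Sum>g\<in>F. p g x / q g x * P (inv g x)) = Q x"
    and g0: "g0 \<in> F"
  shows "\<exists>Q\<in>polyfun. \<forall>x. p g0 x * (\<Prod>g\<in>F-{g0}. lf L (inv g0 x) - lf L (inv g x)) = Q x * q g0 x"
proof -
  let ?G = "{x. \<forall>g\<in>F. q g x \<noteq> 0}"
  have A1: "finite S \<Longrightarrow> S \<subseteq> F \<Longrightarrow> \<forall>P\<in>polyfun. \<exists>Q\<in>polyfun. \<forall>x\<in>?G.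
     (\<Sum>g\<in>F. p g x / q g x * (\<Prod>g'\<in>S. lf L (inv g x) - lf L (inv g' x)) * P (inv g x)) = Q x" for S
  proof (induction S rule: finite_induct)
    case empty then show ?case using hT by simp
  next
    case (insert a S)
    show ?case
    proof
      fix P :: "complex^'n \<Rightarrow> complex" assume P: "P \<in> polyfun"
      have LP: "(\<lambda>y. lf L y * P y) \<in> polyfun" using pf_mult[OF pf_lf P] .
      have IH: "\<forall>P\<in>polyfun. \<exists>Q\<in>polyfun. \<forall>x\<in>?G.
         (\<Sum>g\<in>F. p g x / q g x * (\<Prod>g'\<in>S. lf L (inv g x) - lf L (inv g' x)) * P (inv g x)) = Q x"
        using insert by blast
      obtain Q1 where Q1: "Q1 \<in> polyfun" "\<forall>x\<in>?G. (\<Sum>g\<in>F. p g x / q g x * (\<Prod>g'\<in>S. lf L (inv g x) - lf L (inv g' x)) * (lf L (inv g x) * P (inv g x))) = Q1 x"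
        using bspec[OF IH LP] by blast
      obtain Q2 where Q2: "Q2 \<in> polyfun" "\<forall>x\<in>?G. (\<Sum>g\<in>F. p g x / q g x * (\<Prod>g'\<in>S. lf L (inv g x) - lf L (inv g' x)) * P (inv g x)) = Q2 x"
        using bspec[OF IH P] by blast
      have aW: "a \<in> ext_weyl_group Phi cor" using insert FW by blast
      have ua: "(\<lambda>x. lf L (inv a x)) \<in> polyfun" using pf_invlf[OF rd aW] .
      show "\<exists>Q\<in>polyfun. \<forall>x\<in>?G. (\<Sum>g\<in>F. p g x / q g x * (\<Prod>g'\<in>insert a S. lf L (inv g x) - lf L (inv g' x)) * P (inv g x)) = Q x"
      proof (intro bexI[of _ "\<lambda>x. Q1 x - lf L (inv a x) * Q2 x"] ballI)
        show "(\<lambda>x. Q1 x - lf L (inv a x) * Q2 x) \<in> polyfun" using Q1 Q2 ua by (intro pf_diff pf_mult)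
        fix x assume x: "x \<in> ?G"
        have "(\<Sum>g\<in>F. p g x / q g x * (\<Prod>g'\<in>insert a S. lf L (inv g x) - lf L (inv g' x)) * P (inv g x))
          = (\<Sum>g\<in>F. p g x / q g x * (\<Prod>g'\<in>S. lf L (inv g x) - lf L (inv g' x)) * (lf L (inv g x) * P (inv g x))
              - lf L (inv a x) * (p g x / q g x * (\<Prod>g'\<in>S. lf L (inv g x) - lf L (inv g' x)) * P (inv g x)))"
          using insert.hyps by (intro sum.cong) (simp_all add: algebra_simps)
        also have "\<dots> = (\<Sum>g\<in>F. p g x / q g x * (\<Prod>g'\<in>S. lf L (inv g x) - lf L (inv g' x)) * (lf L (inv g x) * P (inv g x)))
              - lf L (inv a x) * (\<Sum>g\<in>F. p g x / q g x * (\<Prod>g'\<in>S. lf L (inv g x) - lf L (inv g' x)) * P (inv g x))"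
          by (simp only: sum_subtractf sum_distrib_left)
        also have "\<dots> = Q1 x - lf L (inv a x) * Q2 x"
          by (simp only: Q1(2)[rule_format, OF x] Q2(2)[rule_format, OF x])
        finally show "(\<Sum>g\<in>F. p g x / q g x * (\<Prod>g'\<in>insert a S. lf L (inv g x) - lf L (inv g' x)) * P (inv g x)) = Q1 x - lf L (inv a x) * Q2 x" .
      qed
    qed
  qed
  obtain Q where Q: "Q \<in> polyfun" "\<forall>x\<in>?G. (\<Sum>g\<in>F. p g x / q g x * (\<Prod>g'\<in>F-{g0}. lf L (inv g x) - lf L (inv g' x)) * 1) = Q x"
    using bspec[OF A1[of "F-{g0}"] pf_const[of 1]] finF by blast
  let ?D = "\<lambda>x. \<Prod>g\<in>F-{g0}. lf L (inv g0 x) - lf L (inv g x)"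
  have onG: "p g0 x * ?D x = Q x * q g0 x" if x: "x \<in> ?G" for x
  proof -
    have z: "(\<Prod>g'\<in>F-{g0}. lf L (inv g x) - lf L (inv g' x)) = 0" if "g \<in> F-{g0}" for g
      using that finF by (auto simp: prod_zero_iff)
    have "(\<Sum>g\<in>F. p g x / q g x * (\<Prod>g'\<in>F-{g0}. lf L (inv g x) - lf L (inv g' x)) * 1)
        = p g0 x / q g0 x * ?D x"
      using z by (simp add: sum.remove[OF finF g0])
    hence "p g0 x / q g0 x * ?D x = Q x" using Q x by simp
    moreover have "q g0 x \<noteq> 0" using x g0 by blast
    ultimately show ?thesis by (simp add: field_simps)
  qed
  have Dp: "?D \<in> polyfun"
    using FW finF by (intro pf_prod) (auto intro!: pf_diff pf_invlf[OF rd] g0)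
  have qq: "(\<lambda>x. \<Prod>g\<in>F. q g x) \<in> polyfun" using pq finF by (intro pf_prod) auto
  have qnz: "(\<lambda>x. \<Prod>g\<in>F. q g x) \<noteq> (\<lambda>x. 0)" using pq finF by (intro pf_prod_nz) auto
  have "(\<lambda>x. p g0 x * ?D x) = (\<lambda>x. Q x * q g0 x)"
  proof (rule pf_cancel[OF _ _ qq qnz])
    show "(\<lambda>x. p g0 x * ?D x) \<in> polyfun" using pq g0 Dp by (intro pf_mult) auto
    show "(\<lambda>x. Q x * q g0 x) \<in> polyfun" using pq g0 Q by (intro pf_mult) auto
    show "\<forall>x. p g0 x * ?D x * (\<Prod>g\<in>F. q g x) = Q x * q g0 x * (\<Prod>g\<in>F. q g x)"
    proof
      fix x show "p g0 x * ?D x * (\<Prod>g\<in>F. q g x) = Q x * q g0 x * (\<Prod>g\<in>F. q g x)"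
      proof (cases "x \<in> ?G")
        case True then show ?thesis using onG by simp
      next
        case False then have "(\<Prod>g\<in>F. q g x) = 0" using finF by (auto simp: prod_zero_iff)
        then show ?thesis by simp
      qed
    qed
  qed
  then show ?thesis using Q(1) by (metis)
qed



lemma aff_nz: "a \<noteq> 0 \<Longrightarrow> \<exists>x. aff a c x \<noteq> 0"
proof -
  assume "a \<noteq> 0"
  then obtain k where ak: "a$k \<noteq> 0" by (metis vec_eq_iff zero_index)
  have "aff a c (((1 - c)/a$k) *s axis k 1) = 1" using ak by (simp add: aff_def lf_smult lf_axis)
  then show ?thesis by (metis one_neq_zero)
qed

lemma aff_zero: "aff 0 c x = c" by (simp add: aff_def lf_def)

lemma affine_fun_aff: "affine_fun f \<Longrightarrow> \<exists>a c. f = aff a c"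
  unfolding affine_fun_def aff_def lf_def by blast

lemma pf_pi: "(\<lambda>x. (x - (aff a c x / a$k) *s axis k 1) $ i) \<in> polyfun"
proof -
  have "(\<lambda>x. x$i - (aff a c x * inverse (a$k)) * (axis k 1 :: complex^_)$i) \<in> polyfun"
    by (rule pf_diff[OF pf_coord pf_mult[OF pf_mult[OF pf_aff pf_const] pf_const]])
  thus ?thesis by (simp add: divide_inverse)
qed

lemma aff_hyp: "{x. aff a c x = 0} = {x. (\<Sum>i\<in>UNIV. a$i * x$i) = - c}"
  unfolding aff_def lf_def eq_neg_iff_add_eq_0 ..



theorem mainTheorem7:
  fixes Phi :: "(int^'n) set" and cor :: "int^'n \<Rightarrow> int^'n"
    and l :: "(complex^'n \<Rightarrow> complex^'n) \<Rightarrow> complex^'n \<Rightarrow> complex"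
    and F :: "(complex^'n \<Rightarrow> complex^'n) set"
    and p q :: "(complex^'n \<Rightarrow> complex^'n) \<Rightarrow> complex^'n \<Rightarrow> complex"
  assumes "root_datum Phi cor"
    and "\<forall>s\<in>affine_reflections Phi cor. affine_fun (l s) \<and> {x. l s x = 0} = {x. s x = x}"
    and "finite F" and "F \<subseteq> ext_weyl_group Phi cor"
    and "\<forall>g\<in>F. p g \<in> polyfun \<and> q g \<in> polyfun \<and> q g \<noteq> (\<lambda>x. 0)"
    and "\<forall>P\<in>polyfun. \<exists>Q\<in>polyfun. \<forall>x. (\<forall>g\<in>F. q g x \<noteq> 0) \<longrightarrow>
           (\<Sum>g\<in>F. p g x / q g x * P (inv g x)) = Q x"
  shows "\<forall>g\<in>F. \<exists>r\<in>polyfun. \<exists>ss. set ss \<subseteq> affine_reflections Phi cor \<and>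
           (\<forall>x. p g x * (\<Prod>s\<leftarrow>ss. l s x) = r x * q g x)"
proof
  fix g0 assume g0: "g0 \<in> F"
  note rd = assms(1) and hl = assms(2) and finF = assms(3) and FW = assms(4) and pq = assms(5) and hT = assms(6)
  let ?AR = "affine_reflections Phi cor"
  let ?goal = "\<exists>r\<in>polyfun. \<exists>ss. set ss \<subseteq> ?AR \<and> (\<forall>x. p g0 x * (\<Prod>s\<leftarrow>ss. l s x) = r x * q g0 x)"
  have lpf: "l s \<in> polyfun" if "s \<in> ?AR" for s
    using hl that affine_fun_aff pf_aff by metis
  have lprod: "set ss \<subseteq> ?AR \<Longrightarrow> (\<lambda>x. \<Prod>s\<leftarrow>ss. l s x) \<in> polyfun" for ss
    using lpf by (intro pf_prod_list) auto
  have g0W: "g0 \<in> ext_weyl_group Phi cor" using g0 FW by blast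
  have pg0: "p g0 \<in> polyfun" "q g0 \<in> polyfun" "q g0 \<noteq> (\<lambda>x. 0)" using pq g0 by auto
  define d where "d L g x = lf L (inv g0 x) - lf L (inv g x)" for L g x
  have dpf: "d L g \<in> polyfun" if gF: "g \<in> F" for L g
  proof -
    have "g \<in> ext_weyl_group Phi cor" using gF FW by blast
    then obtain a c where "(\<lambda>x. lf L (inv g0 x) - lf L (inv g x)) = aff a c"
      using dform[OF rd g0W] by blast
    then show ?thesis using pf_aff unfolding d_def by metis
  qed
  have Dpf: "(\<lambda>x. \<Prod>g\<in>S. d L g x) \<in> polyfun" if "S \<subseteq> F" for S L
    using that finite_subset[OF that finF] dpf by (intro pf_prod) auto
  have stepA': "\<exists>Q\<in>polyfun. \<forall>x. p g0 x * (\<Prod>g\<in>F-{g0}. d L g x) = Q x * q g0 x" for L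
    using stepA[OF rd finF FW pq hT g0, of L] unfolding d_def .
  have genL: "\<exists>L. \<forall>g\<in>F-{g0}. d L g (xs g) \<noteq> 0"
    if xs: "\<forall>g\<in>F-{g0}. inv g0 (xs g) \<noteq> inv g (xs g)" for xs
  proof -
    let ?Z = "(\<lambda>g. inv g0 (xs g) - inv g (xs g)) ` (F - {g0})"
    have "finite ?Z" using finF by simp
    moreover have "0 \<notin> ?Z" using xs by auto
    ultimately obtain L where L: "\<forall>z\<in>?Z. lf L z \<noteq> 0" using generic_lf by blast
    show ?thesis
      by (intro exI[of _ L]) (use L in \<open>auto simp: d_def lf_diff[symmetric]\<close>)
  qed
  have claim: "S \<subseteq> F - {g0} \<longrightarrow> (\<forall>ss Q. set ss \<subseteq> ?AR \<longrightarrow> Q \<in> polyfun \<longrightarrow>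
      (\<forall>x. p g0 x * (\<Prod>g\<in>S. d L0 g x) * (\<Prod>s\<leftarrow>ss. l s x) = Q x * q g0 x) \<longrightarrow> ?goal)"
    if L0: "\<forall>g\<in>F-{g0}. d L0 g \<noteq> (\<lambda>x. 0)" and finS: "finite S" for S L0
    using finS
  proof (induction S rule: finite_induct)
    case empty
    show ?case by auto
  next
    case (insert b S)
    show ?case
    proof (intro impI allI)
      fix ss Q
      assume sub: "insert b S \<subseteq> F - {g0}" and ss: "set ss \<subseteq> ?AR" and Qp: "Q \<in> polyfun"
        and eq: "\<forall>x. p g0 x * (\<Prod>g\<in>insert b S. d L0 g x) * (\<Prod>s\<leftarrow>ss. l s x) = Q x * q g0 x"
      have IH: "\<forall>ss Q. set ss \<subseteq> ?AR \<longrightarrow> Q \<in> polyfun \<longrightarrow>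
         (\<forall>x. p g0 x * (\<Prod>g\<in>S. d L0 g x) * (\<Prod>s\<leftarrow>ss. l s x) = Q x * q g0 x) \<longrightarrow> ?goal"
        using insert.IH sub by blast
      have bF: "b \<in> F" "b \<noteq> g0" using sub by auto
      have bW: "b \<in> ext_weyl_group Phi cor" using bF FW by blast
      have SF: "S \<subseteq> F" using sub by auto
      have eq': "p g0 x * (d L0 b x * (\<Prod>g\<in>S. d L0 g x)) * (\<Prod>s\<leftarrow>ss. l s x) = Q x * q g0 x" for x
        using eq insert.hyps by (simp add: prod.insert)
      obtain a c where dab: "d L0 b = aff a c"
        using dform[OF rd g0W bW, of L0] unfolding d_def by (metis ext)
      have dbnz: "d L0 b \<noteq> (\<lambda>x. 0)" using L0 bF by blast
      show ?goal
      proof (cases "a = 0")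
        case True
        hence dc: "d L0 b x = c" for x by (simp add: dab aff_zero)
        hence c0: "c \<noteq> 0" using dbnz by auto
        have "p g0 x * (\<Prod>g\<in>S. d L0 g x) * (\<Prod>s\<leftarrow>ss. l s x) = (Q x * inverse c) * q g0 x" for x
          using eq'[of x] c0 by (simp add: dc field_simps)
        moreover have "(\<lambda>x. Q x * inverse c) \<in> polyfun" using Qp by (intro pf_mult pf_const)
        ultimately show ?goal using IH ss by blast
      next
        case False
        note a0 = False
        show ?goal
        proof (cases "\<exists>s\<in>?AR. {x. s x = x} = {x. aff a c x = 0}")
          case True
          then obtain s where s: "s \<in> ?AR" "{x. s x = x} = {x. aff a c x = 0}" by blast
          obtain a' c' where ls: "l s = aff a' c'" using hl s(1) affine_fun_aff by blast
          have zs: "{x. l s x = 0} = {x. aff a c x = 0}" using hl s by blast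
          have "\<forall>x. aff a c x = 0 \<longrightarrow> aff a' c' x = 0" using zs ls by auto
          then obtain lam where lam: "\<forall>x. aff a' c' x = lam * aff a c x" using aff_prop[OF a0] by blast
          have lam0: "lam \<noteq> 0"
          proof
            assume "lam = 0"
            hence "{x. l s x = 0} = UNIV" using lam ls by auto
            thus False using zs aff_nz[OF a0, of c] by auto
          qed
          have "p g0 x * (\<Prod>g\<in>S. d L0 g x) * (\<Prod>s\<leftarrow>s#ss. l s x) = (lam * Q x) * q g0 x" for x
          proof -
            have "l s x = lam * d L0 b x" using lam ls dab by simp
            then show ?thesis using eq'[of x] by (simp add: algebra_simps)
          qed
          moreover have "(\<lambda>x. lam * Q x) \<in> polyfun" using Qp by (intro pf_mult pf_const)
          moreover have "set (s#ss) \<subseteq> ?AR" using ss s by auto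
          ultimately show ?goal using IH by blast
        next
          case False
          note nr = False
          obtain k where ak: "a$k \<noteq> 0" using a0 by (metis vec_eq_iff zero_index)
          define \<pi> where "\<pi> x = x - (aff a c x / a$k) *s axis k 1" for x
          have piH: "aff a c x = 0 \<Longrightarrow> \<pi> x = x" for x by (simp add: \<pi>_def)
          have pipf: "(\<lambda>x. \<pi> x $ i) \<in> polyfun" for i unfolding \<pi>_def by (rule pf_pi)
          have sep: "\<exists>x. aff a c x = 0 \<and> inv g0 x \<noteq> inv g' x" if g': "g' \<in> F - {g0}" for g'
          proof (rule ccontr)
            assume "\<not> ?thesis"
            hence same: "aff a c x = 0 \<Longrightarrow> inv g0 x = inv g' x" for x by blast
            have g'W: "g' \<in> ext_weyl_group Phi cor" using g' FW by blast
            let ?s = "g0 \<circ> inv g'"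
            have sW: "?s \<in> ext_weyl_group Phi cor" using ext_comp_inv[OF rd g0W g'W] .
            have saff: "affm ?s" using ext_inv[OF rd sW] by blast
            have sfix: "\<forall>x. aff a c x = 0 \<longrightarrow> ?s x = x"
              using same ext_inv[OF rd g0W] by (simp add: comp_def) (metis)
            have nid: "\<exists>x. ?s x \<noteq> x"
            proof (rule ccontr)
              assume "\<not> ?thesis"
              hence "g0 (inv g' x) = x" for x by simp
              hence "g0 y = g' y" for y using ext_inv[OF rd g'W] by metis
              thus False using g' by (auto simp: fun_eq_iff)
            qed
            have fixH: "{x. ?s x = x} = {x. aff a c x = 0}" using affm_fix[OF saff a0 sfix nid] .
            have "is_affine_hyperplane {x. ?s x = x}"
              unfolding fixH aff_hyp is_affine_hyperplane_def using a0 by blast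
            hence "?s \<in> ?AR" using sW unfolding affine_reflections_def by blast
            thus False using nr fixH by blast
          qed
          define xs where "xs g' = (SOME x. aff a c x = 0 \<and> inv g0 x \<noteq> inv g' x)" for g'
          have xs: "aff a c (xs g') = 0 \<and> inv g0 (xs g') \<noteq> inv g' (xs g')" if "g' \<in> F - {g0}" for g'
            unfolding xs_def using someI_ex[OF sep[OF that]] .
          obtain L' where L': "\<forall>g\<in>F-{g0}. d L' g (xs g) \<noteq> 0" using genL xs by blast
          obtain Q' where Q': "Q' \<in> polyfun" "\<forall>x. p g0 x * (\<Prod>g\<in>F-{g0}. d L' g x) = Q' x * q g0 x"
            using stepA' by blast
          let ?D' = "\<lambda>x. \<Prod>g\<in>F-{g0}. d L' g x"
          let ?B = "\<lambda>x. d L0 b x * (\<Prod>g\<in>S. d L0 g x) * (\<Prod>s\<leftarrow>ss. l s x)"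
          have D'pf: "?D' \<in> polyfun" using Dpf by blast
          have Bpf: "?B \<in> polyfun" using dpf[OF bF(1)] Dpf[OF SF] lprod[OF ss] by (intro pf_mult)
          have QD: "(\<lambda>x. Q x * ?D' x) = (\<lambda>x. Q' x * ?B x)"
          proof (rule pf_cancel[OF _ _ pg0(2) pg0(3)])
            show "(\<lambda>x. Q x * ?D' x) \<in> polyfun" using Qp D'pf by (rule pf_mult)
            show "(\<lambda>x. Q' x * ?B x) \<in> polyfun" using Q'(1) Bpf by (rule pf_mult)
            show "\<forall>x. Q x * ?D' x * q g0 x = Q' x * ?B x * q g0 x"
            proof
              fix x
              have "Q x * ?D' x * q g0 x = (Q x * q g0 x) * ?D' x" by (simp add: algebra_simps)
              also have "\<dots> = (p g0 x * (d L0 b x * (\<Prod>g\<in>S. d L0 g x)) * (\<Prod>s\<leftarrow>ss. l s x)) * ?D' x"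
                using eq'[of x] by simp
              also have "\<dots> = (p g0 x * ?D' x) * ?B x" by (simp add: algebra_simps)
              also have "\<dots> = Q' x * ?B x * q g0 x" using Q'(2) by (simp add: algebra_simps)
              finally show "Q x * ?D' x * q g0 x = Q' x * ?B x * q g0 x" .
            qed
          qed
          have Qpi: "(\<lambda>x. Q (\<pi> x)) = (\<lambda>x. 0)"
          proof (rule pf_domain[of "\<lambda>x. ?D' (\<pi> x)"])
            show "(\<lambda>x. ?D' (\<pi> x)) \<in> polyfun" using pf_comp[OF D'pf pipf] .
            show "(\<lambda>x. Q (\<pi> x)) \<in> polyfun" using pf_comp[OF Qp pipf] .
            show "\<forall>x. ?D' (\<pi> x) * Q (\<pi> x) = 0"
            proof
              fix x
              have "d L0 b (\<pi> x) = 0" using aff_pi[OF ak] by (simp add: dab \<pi>_def)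
              then show "?D' (\<pi> x) * Q (\<pi> x) = 0" using fun_cong[OF QD, of "\<pi> x"] by (simp add: mult.commute)
            qed
            show "(\<lambda>x. ?D' (\<pi> x)) \<noteq> (\<lambda>x. 0)"
            proof (rule pf_prod_nz)
              show "finite (F - {g0})" using finF by simp
              show "\<forall>j\<in>F - {g0}. (\<lambda>x. d L' j (\<pi> x)) \<in> polyfun \<and> (\<lambda>x. d L' j (\<pi> x)) \<noteq> (\<lambda>x. 0)"
              proof
                fix j assume j: "j \<in> F - {g0}"
                have "(\<lambda>x. d L' j (\<pi> x)) \<in> polyfun" using pf_comp[OF dpf pipf] j by blast
                moreover have "d L' j (\<pi> (xs j)) \<noteq> 0" using xs[OF j] L' j piH by metis
                ultimately show "(\<lambda>x. d L' j (\<pi> x)) \<in> polyfun \<and> (\<lambda>x. d L' j (\<pi> x)) \<noteq> (\<lambda>x. 0)" by metis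
              qed
            qed
          qed
          obtain R where R: "R \<in> polyfun" "\<forall>x. Q x = aff a c x * R x + Q (\<pi> x)"
            using pf_div[OF ak Qp, of c] unfolding \<pi>_def by blast
          have QR: "Q x = d L0 b x * R x" for x
          proof -
            have "Q x = aff a c x * R x + Q (\<pi> x)" using R(2) by blast
            then show ?thesis using fun_cong[OF Qpi, of x] by (simp add: dab)
          qed
          have "(\<lambda>x. p g0 x * (\<Prod>g\<in>S. d L0 g x) * (\<Prod>s\<leftarrow>ss. l s x)) = (\<lambda>x. R x * q g0 x)"
          proof (rule pf_cancel[OF _ _ dpf[OF bF(1)] dbnz])
            show "(\<lambda>x. p g0 x * (\<Prod>g\<in>S. d L0 g x) * (\<Prod>s\<leftarrow>ss. l s x)) \<in> polyfun"
              using pg0(1) Dpf[OF SF] lprod[OF ss] by (intro pf_mult)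
            show "(\<lambda>x. R x * q g0 x) \<in> polyfun" using R(1) pg0(2) by (rule pf_mult)
            show "\<forall>x. p g0 x * (\<Prod>g\<in>S. d L0 g x) * (\<Prod>s\<leftarrow>ss. l s x) * d L0 b x = R x * q g0 x * d L0 b x"
            proof
              fix x
              have "p g0 x * (\<Prod>g\<in>S. d L0 g x) * (\<Prod>s\<leftarrow>ss. l s x) * d L0 b x = Q x * q g0 x"
                using eq'[of x] by (simp add: algebra_simps)
              also have "\<dots> = R x * q g0 x * d L0 b x" by (simp add: QR algebra_simps)
              finally show "p g0 x * (\<Prod>g\<in>S. d L0 g x) * (\<Prod>s\<leftarrow>ss. l s x) * d L0 b x = R x * q g0 x * d L0 b x" .
            qed
          qed
          hence eqR: "\<forall>x. p g0 x * (\<Prod>g\<in>S. d L0 g x) * (\<Prod>s\<leftarrow>ss. l s x) = R x * q g0 x"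
            by (simp add: fun_eq_iff)
          show ?goal using mp[OF mp[OF mp[OF spec[OF spec[OF IH, of ss], of R] ss] R(1)] eqR] .
        qed
      qed
    qed
  qed
  have sep0: "\<exists>x. inv g0 x \<noteq> inv g x" if "g \<in> F - {g0}" for g
    using inv_neq[OF rd g0W] that FW by blast
  define xs0 where "xs0 g = (SOME x. inv g0 x \<noteq> inv g x)" for g
  have xs0: "\<forall>g\<in>F-{g0}. inv g0 (xs0 g) \<noteq> inv g (xs0 g)"
    unfolding xs0_def using someI_ex[OF sep0] by blast
  obtain L0 where L0: "\<forall>g\<in>F-{g0}. d L0 g (xs0 g) \<noteq> 0" using genL[OF xs0] by blast
  have L0nz: "\<forall>g\<in>F-{g0}. d L0 g \<noteq> (\<lambda>x. 0)" using L0 by (metis)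
  obtain Q where Q: "Q \<in> polyfun" "\<forall>x. p g0 x * (\<Prod>g\<in>F-{g0}. d L0 g x) = Q x * q g0 x"
    using stepA' by blast
  have eqn: "\<forall>x. p g0 x * (\<Prod>g\<in>F-{g0}. d L0 g x) * (\<Prod>s\<leftarrow>[]. l s x) = Q x * q g0 x" using Q by simp
  have fin: "finite (F - {g0})" using finF by simp
  have X: "\<forall>ss Q. set ss \<subseteq> ?AR \<longrightarrow> Q \<in> polyfun \<longrightarrow>
      (\<forall>x. p g0 x * (\<Prod>g\<in>F-{g0}. d L0 g x) * (\<Prod>s\<leftarrow>ss. l s x) = Q x * q g0 x) \<longrightarrow> ?goal"
    using mp[OF claim[OF L0nz fin] subset_refl] .
  have e0: "set ([]::(complex^'n \<Rightarrow> complex^'n) list) \<subseteq> ?AR" by simp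
  show ?goal using mp[OF mp[OF mp[OF spec[OF spec[OF X, of "[]"], of Q] e0] Q(1)] eqn] .
qed


end
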